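(* For every nonnegative integer $n$ with $v(n)=0$, the directed graph $A(n)$ is a directed path graph.
   Context: A hyperbinary expansion of a nonnegative integer $n$ is a word $x_0\cdots x_k$ over $\{0,1,2\}$ with $x_0\ne0$ and $\sum_i x_i2^{k-i}=n$. The empty word is the unique hyperbinary expansion of $0$. Write $\mathcal H(n)$ for the set of such expansions and $b(n)=|\mathcal H(n)|$. $A(n)$ is the directed graph on $\mathcal H(n)$ with an arc from $\mathbf x02\mathbf y$ to $\mathbf x10\mathbf y$, from $2\mathbf y$ to $10\mathbf y$, and from $\mathbf x12\mathbf y$ to $\mathbf x20\mathbf y$, for arbitrary words $\mathbf x,\mathbf y$ whenever both endpoints lie in $\mathcal H(n)$. $A(n)$ is connected. $v(n)$ denotes the cyclomatic number of $A(n)$: (number of arcs) $-\,b(n)+1$. A directed path graph is a graph whose vertices can be listed $u_0,\dots,u_k$ so that its arcs are exactly $(u_{i-1},u_i)$ for $1\le i\le k$. *)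

theory Defs
  imports Main
begin

text \<open>Words over {0,1,2} are lists of naturals, most significant digit first.\<close>

definition hb_val :: "nat list \<Rightarrow> nat" where
  "hb_val xs = foldl (\<lambda>a d. 2 * a + d) 0 xs"

definition H :: "nat \<Rightarrow> nat list set" where
  "H n = {xs. set xs \<subseteq> {0,1,2} \<and> (xs \<noteq> [] \<longrightarrow> hd xs \<noteq> 0) \<and> hb_val xs = n}"

definition b :: "nat \<Rightarrow> nat" where
  "b n = card (H n)"

definition arcs :: "nat \<Rightarrow> (nat list \<times> nat list) set" where
  "arcs n = {(u, w). u \<in> H n \<and> w \<in> H n \<and>
     ((\<exists>x y. u = x @ [0,2] @ y \<and> w = x @ [1,0] @ y)
      \<or> (\<exists>y. u = 2 # y \<and> w = [1,0] @ y)
      \<or> (\<exists>x y. u = x @ [1,2] @ y \<and> w = x @ [2,0] @ y))}"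

definition v :: "nat \<Rightarrow> int" where
  "v n = int (card (arcs n)) - int (b n) + 1"

definition is_directed_path_graph :: "'a set \<Rightarrow> ('a \<times> 'a) set \<Rightarrow> bool" where
  "is_directed_path_graph V E \<longleftrightarrow>
     (\<exists>us. us \<noteq> [] \<and> distinct us \<and> set us = V \<and>
        E = {(us ! (i - 1), us ! i) | i. 1 \<le> i \<and> i < length us})"

end

theory Submission
  imports Defs
begin

lemma zip_path_set:
  "{(us ! (i - 1), us ! i) | i. 1 \<le> i \<and> i < length us} = set (zip us (tl us))"
proof (induction us)
  case Nil
  then show ?case by simp
next
  case (Cons a us)
  show ?case
  proof (cases us)
    case Nil
    then show ?thesis by auto
  next
    case (Cons x r)
    have "{((a # us) ! (i - 1), (a # us) ! i) | i. 1 \<le> i \<and> i < length (a # us)}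
        = insert (a, x) {(us ! (i - 1), us ! i) | i. 1 \<le> i \<and> i < length us}"
    proof (rule set_eqI, rule iffI)
      fix p assume "p \<in> {((a # us) ! (i - 1), (a # us) ! i) | i. 1 \<le> i \<and> i < length (a # us)}"
      then obtain i where i: "p = ((a # us) ! (i - 1), (a # us) ! i)" "1 \<le> i" "i < length (a # us)" by blast
      show "p \<in> insert (a, x) {(us ! (i - 1), us ! i) | i. 1 \<le> i \<and> i < length us}"
      proof (cases "i = 1")
        case True then show ?thesis using i Cons by simp
      next
        case False
        then have "p = (us ! (i - 1 - 1), us ! (i - 1))" "1 \<le> i - 1" "i - 1 < length us"
          using i by (auto simp: nth_Cons split: nat.splits)
        then show ?thesis by blast
      qed
    next
      fix p assume "p \<in> insert (a, x) {(us ! (i - 1), us ! i) | i. 1 \<le> i \<and> i < length us}"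
      then show "p \<in> {((a # us) ! (i - 1), (a # us) ! i) | i. 1 \<le> i \<and> i < length (a # us)}"
      proof
        assume "p = (a, x)"
        then have "p = ((a # us) ! (1 - 1), (a # us) ! 1)" "1 \<le> (1::nat)" "1 < length (a # us)"
          using Cons by auto
        then show ?thesis by blast
      next
        assume "p \<in> {(us ! (i - 1), us ! i) | i. 1 \<le> i \<and> i < length us}"
        then obtain i where i: "p = (us ! (i - 1), us ! i)" "1 \<le> i" "i < length us" by blast
        then have "p = ((a # us) ! (Suc i - 1), (a # us) ! Suc i)" "1 \<le> Suc i" "Suc i < length (a # us)"
          by (auto simp: nth_Cons split: nat.splits)
        then show ?thesis by blast
      qed
    qed
    then show ?thesis using Cons.IH Cons by simp
  qed
qed

lemma path_aux:
  fixes V :: "'a set" and E :: "('a \<times> 'a) set" and \<phi> :: "'a \<Rightarrow> nat"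
  assumes "card V = k" "finite V" "E \<subseteq> V \<times> V" "\<And>a b. (a,b) \<in> E \<Longrightarrow> \<phi> a < \<phi> b"
    "s \<in> V" "t \<in> V"
    "\<And>u. u \<in> V \<Longrightarrow> u \<noteq> t \<Longrightarrow> \<exists>w. (u,w) \<in> E"
    "\<And>u. u \<in> V \<Longrightarrow> u \<noteq> s \<Longrightarrow> \<exists>w. (w,u) \<in> E"
    "card E + 1 = card V"
  shows "\<exists>us. us \<noteq> [] \<and> distinct us \<and> set us = V \<and> hd us = s \<and> E = set (zip us (tl us))"
  using assms
proof (induction k arbitrary: V E s)
  case 0
  then show ?case by auto
next
  case (Suc k)
  have finE: "finite E" using Suc.prems(2,3) finite_subset by blast
  define g where "g u = (u, SOME w. (u,w) \<in> E)" for u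
  have gE: "g ` (V - {t}) \<subseteq> E"
  proof
    fix p assume "p \<in> g ` (V - {t})"
    then obtain u where u: "u \<in> V" "u \<noteq> t" "p = g u" by blast
    from Suc.prems(7)[OF u(1,2)] have "\<exists>w. (u,w) \<in> E" .
    then show "p \<in> E" unfolding u(3) g_def by (rule someI_ex)
  qed
  have "inj_on g (V - {t})" unfolding g_def inj_on_def by auto
  then have "card (g ` (V - {t})) = card (V - {t})" by (rule card_image)
  also have "\<dots> = card E" using Suc.prems(1,6,9) by simp
  finally have gall: "g ` (V - {t}) = E" using card_subset_eq[OF finE gE] by simp
  have outu: "\<And>a b c. (a,b) \<in> E \<Longrightarrow> (a,c) \<in> E \<Longrightarrow> b = c"
  proof -
    fix a b c assume ab: "(a,b) \<in> E" and ac: "(a,c) \<in> E"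
    from ab gall obtain u where "(a,b) = g u" by blast
    moreover from ac gall obtain u' where "(a,c) = g u'" by blast
    ultimately show "b = c" unfolding g_def by auto
  qed
  have tout: "\<And>b. (t,b) \<notin> E"
  proof
    fix b assume "(t,b) \<in> E"
    with gall obtain u where "u \<in> V - {t}" "(t,b) = g u" by blast
    then show False unfolding g_def by auto
  qed
  define h where "h u = (SOME w. (w,u) \<in> E, u)" for u
  have hE: "h ` (V - {s}) \<subseteq> E"
  proof
    fix p assume "p \<in> h ` (V - {s})"
    then obtain u where u: "u \<in> V" "u \<noteq> s" "p = h u" by blast
    from Suc.prems(8)[OF u(1,2)] have "\<exists>w. (w,u) \<in> E" .
    then show "p \<in> E" unfolding u(3) h_def by (rule someI_ex)
  qed
  have "inj_on h (V - {s})" unfolding h_def inj_on_def by auto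
  then have "card (h ` (V - {s})) = card (V - {s})" by (rule card_image)
  also have "\<dots> = card E" using Suc.prems(1,5,9) by simp
  finally have hall: "h ` (V - {s}) = E" using card_subset_eq[OF finE hE] by simp
  have inu: "\<And>a b c. (b,a) \<in> E \<Longrightarrow> (c,a) \<in> E \<Longrightarrow> b = c"
  proof -
    fix a b c assume ab: "(b,a) \<in> E" and ac: "(c,a) \<in> E"
    from ab hall obtain u where "(b,a) = h u" by blast
    moreover from ac hall obtain u' where "(c,a) = h u'" by blast
    ultimately show "b = c" unfolding h_def by auto
  qed
  have sin: "\<And>b. (b,s) \<notin> E"
  proof
    fix b assume "(b,s) \<in> E"
    with hall obtain u where "u \<in> V - {s}" "(b,s) = h u" by blast
    then show False unfolding h_def by auto
  qed
  show ?case
  proof (cases k)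
    case 0
    then have "card V = 1" using Suc.prems(1) by simp
    then obtain x where "V = {x}" by (rule card_1_singletonE)
    then have V: "V = {s}" using Suc.prems(5) by simp
    then have "E = {}" using Suc.prems(9) finE by simp
    then show ?thesis using V by (intro exI[of _ "[s]"]) simp
  next
    case (Suc k')
    have "card (V - {s}) = Suc k'" using Suc.prems(1,5) Suc by simp
    then have ne: "V - {s} \<noteq> {}" by (metis card.empty nat.distinct(1))
    have "s \<noteq> t"
    proof
      assume st: "s = t"
      have finV': "finite (\<phi> ` (V - {s}))" using Suc.prems(2) by simp
      have "Min (\<phi> ` (V - {s})) \<in> \<phi> ` (V - {s})" using Min_in[OF finV'] ne by simp
      then obtain u where u: "u \<in> V - {s}" "\<phi> u = Min (\<phi> ` (V - {s}))" by (metis imageE)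
      then obtain w where w: "(w,u) \<in> E" using Suc.prems(8) by blast
      then have "w \<in> V" using Suc.prems(3) by blast
      have "\<phi> w < \<phi> u" using Suc.prems(4) w by blast
      have "w = s"
      proof (rule ccontr)
        assume "w \<noteq> s"
        then have "\<phi> w \<in> \<phi> ` (V - {s})" using \<open>w \<in> V\<close> by blast
        then have "Min (\<phi> ` (V - {s})) \<le> \<phi> w" using Min_le[OF finV'] by blast
        then show False using u(2) \<open>\<phi> w < \<phi> u\<close> by simp
      qed
      then show False using w st tout by blast
    qed
    then obtain s' where s': "(s,s') \<in> E" using Suc.prems(5,7) by blast
    define V' where "V' = V - {s}"
    define E' where "E' = E - {(s,s')}"
    have cV': "card V' = k" using Suc.prems(1,5) V'_def by simp
    have cE': "card E' + 1 = card V'"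
      using Suc.prems(1,5,9) s' finE V'_def E'_def by (simp add: card_Diff_singleton) (metis card_0_eq empty_iff Suc_pred not_gr0)
    have sub': "E' \<subseteq> V' \<times> V'"
    proof
      fix p assume p: "p \<in> E'"
      obtain a c where ac: "p = (a,c)" by fastforce
      have "(a,c) \<in> E" using p ac E'_def by simp
      moreover have "a \<noteq> s" using p ac E'_def outu s' by auto
      moreover have "c \<noteq> s" using sin \<open>(a,c) \<in> E\<close> by blast
      ultimately show "p \<in> V' \<times> V'" using Suc.prems(3) ac V'_def by auto
    qed
    have s'V: "s' \<in> V'" using s' Suc.prems(3) sin V'_def by (metis DiffI SigmaD2 singletonD subsetD)
    have tV: "t \<in> V'" using Suc.prems(6) \<open>s \<noteq> t\<close> V'_def by simp
    obtain us' where us': "us' \<noteq> []" "distinct us'" "set us' = V'" "hd us' = s'"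
      "E' = set (zip us' (tl us'))"
    proof (rule Suc.IH[OF cV', of E' s', THEN exE])
      show "finite V'" using Suc.prems(2) V'_def by simp
      show "E' \<subseteq> V' \<times> V'" by (rule sub')
      show "\<And>a b. (a, b) \<in> E' \<Longrightarrow> \<phi> a < \<phi> b" using Suc.prems(4) E'_def by blast
      show "s' \<in> V'" by (rule s'V)
      show "t \<in> V'" by (rule tV)
      show "\<exists>w. (u, w) \<in> E'" if uu: "u \<in> V'" "u \<noteq> t" for u
      proof -
        obtain w where "(u,w) \<in> E" using Suc.prems(7) uu V'_def by blast
        then show ?thesis using uu V'_def E'_def by blast
      qed
      show "\<exists>w. (w, u) \<in> E'" if uu: "u \<in> V'" "u \<noteq> s'" for u
      proof -
        obtain w where "(w,u) \<in> E" using Suc.prems(8) uu V'_def by blast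
        then show ?thesis using uu V'_def E'_def by blast
      qed
      show "card E' + 1 = card V'" by (rule cE')
    qed blast
    show ?thesis
    proof (intro exI[of _ "s # us'"] conjI)
      show "distinct (s # us')" using us' V'_def by simp
      show "set (s # us') = V" using us' V'_def Suc.prems(5) by auto
      obtain x r where xr: "us' = x # r" using us'(1) by (cases us') auto
      have "E = insert (s,s') E'" using s' E'_def by auto
      then show "E = set (zip (s # us') (tl (s # us')))" using us' xr by simp
    qed simp_all
  qed
qed


lemma foldl_base:
  "foldl (\<lambda>a d. B * a + d) a y = a * B ^ length y + foldl (\<lambda>a d. B * a + (d::nat)) 0 y"
proof (induction y arbitrary: a)
  case Nil
  then show ?case by simp
next
  case (Cons c ys)
  have "foldl (\<lambda>a d. B * a + d) a (c # ys) = foldl (\<lambda>a d. B * a + d) (B * a + c) ys" by simp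
  also have "\<dots> = (B * a + c) * B ^ length ys + foldl (\<lambda>a d. B * a + d) 0 ys" by (rule Cons.IH)
  also have "foldl (\<lambda>a d. B * a + d) 0 (c # ys) = c * B ^ length ys + foldl (\<lambda>a d. B * a + d) 0 ys"
    using Cons.IH[of c] by simp
  ultimately show ?case by (simp add: algebra_simps)
qed

lemma hb_append: "hb_val (x @ y) = hb_val x * 2 ^ length y + hb_val y"
  unfolding hb_val_def by (simp add: foldl_base[of 2 "foldl _ 0 x"])

lemma hb_snoc: "hb_val (x @ [d]) = 2 * hb_val x + d"
  unfolding hb_val_def by simp

definition val3 :: "nat list \<Rightarrow> nat" where
  "val3 xs = foldl (\<lambda>a d. 3 * a + d) 0 xs"

lemma v3_append: "val3 (x @ y) = val3 x * 3 ^ length y + val3 y"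
  unfolding val3_def by (simp add: foldl_base[of 3 "foldl _ 0 x"])

lemma v3_cons: "val3 (d # y) = d * 3 ^ length y + val3 y"
  using v3_append[of "[d]" y] by (simp add: val3_def)

lemma hb_cons: "hb_val (d # y) = d * 2 ^ length y + hb_val y"
  using hb_append[of "[d]" y] by (simp add: hb_val_def)

lemma hb_mid: "hb_val (x @ a # c # y) = hb_val x * 2 ^ (length y + 2) + (2 * a + c) * 2 ^ length y + hb_val y"
  by (simp only: hb_append hb_cons) (simp add: algebra_simps)

lemma v3_mid: "val3 (x @ a # c # y) = val3 x * 3 ^ (length y + 2) + (3 * a + c) * 3 ^ length y + val3 y"
  by (simp only: v3_append v3_cons) (simp add: algebra_simps)

lemma arc_incr:
  assumes "(u, w) \<in> arcs n" shows "val3 u < val3 w"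
  using assms unfolding arcs_def
  by (auto simp: v3_mid v3_cons)

lemma len_le_val: "(xs \<noteq> [] \<longrightarrow> hd xs \<noteq> 0) \<Longrightarrow> length xs \<le> hb_val xs"
proof (induction xs rule: rev_induct)
  case Nil
  then show ?case by simp
next
  case (snoc d a)
  show ?case
  proof (cases "a = []")
    case True
    then show ?thesis using snoc.prems by (simp add: hb_val_def)
  next
    case False
    then have "length a \<le> hb_val a" using snoc by simp
    moreover have "length a \<ge> 1" using False by (cases a) auto
    ultimately show ?thesis by (simp add: hb_snoc)
  qed
qed

lemma finite_H: "finite (H n)"
proof -
  have "H n \<subseteq> {xs. set xs \<subseteq> {0,1,2} \<and> length xs \<le> n}"
    unfolding H_def using len_le_val by auto
  moreover have "finite {xs. set xs \<subseteq> {0::nat,1,2} \<and> length xs \<le> n}"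
    by (rule finite_lists_length_le) simp
  ultimately show ?thesis by (rule finite_subset)
qed

lemma arcs_sub: "arcs n \<subseteq> H n \<times> H n"
  unfolding arcs_def by auto

lemma H_mid:
  assumes "x @ [a, c] @ y \<in> H n" "2 * a + c = 2 * a' + c'" "a' \<in> {0,1,2}" "c' \<in> {0,1,2}"
    "x = [] \<longrightarrow> a' \<noteq> 0"
  shows "x @ [a', c'] @ y \<in> H n"
proof -
  have v: "hb_val (x @ [a', c'] @ y) = hb_val (x @ [a, c] @ y)"
    using assms(2) by (simp only: append_Cons append_Nil hb_mid)
  have h: "x @ [a', c'] @ y \<noteq> [] \<longrightarrow> hd (x @ [a', c'] @ y) \<noteq> 0"
    using assms(1,5) unfolding H_def by (cases x) auto
  show ?thesis using assms(1,3,4) v h unfolding H_def by auto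
qed

lemma H_lead:
  assumes "2 # y \<in> H n" shows "[1,0] @ y \<in> H n"
  using assms unfolding H_def by (auto simp: hb_cons)

lemma H_lead':
  assumes "[1,0] @ y \<in> H n" shows "2 # y \<in> H n"
  using assms unfolding H_def by (auto simp: hb_cons)

lemma no_out:
  assumes u: "u \<in> H n" and no: "\<And>w. (u, w) \<notin> arcs n"
  shows "set u \<subseteq> {0,1}"
proof (rule ccontr)
  assume "\<not> set u \<subseteq> {0,1}"
  then have "2 \<in> set u" using u unfolding H_def by auto
  then obtain a c where ac: "u = a @ 2 # c" "2 \<notin> set a" by (metis split_list_first)
  show False
  proof (cases a rule: rev_exhaust)
    case Nil
    then have "(u, [1,0] @ c) \<in> arcs n" using u ac H_lead unfolding arcs_def by auto
    then show False using no by blast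
  next
    case (snoc a' d)
    have "d \<in> {0,1}" using snoc ac u unfolding H_def by auto
    then show False
    proof
      assume d: "d = 0"
      have "u = a' @ [0,2] @ c" using ac snoc d by simp
      moreover have "a' @ [1,0] @ c \<in> H n" using H_mid[of a' 0 2 c n 1 0] u calculation by simp
      ultimately have "(u, a' @ [1,0] @ c) \<in> arcs n" using u unfolding arcs_def by blast
      then show False using no by blast
    next
      assume d: "d \<in> {1}"
      have "u = a' @ [1,2] @ c" using ac snoc d by simp
      moreover have "a' @ [2,0] @ c \<in> H n" using H_mid[of a' 1 2 c n 2 0] u calculation by simp
      ultimately have "(u, a' @ [2,0] @ c) \<in> arcs n" using u unfolding arcs_def by blast
      then show False using no by blast
    qed
  qed
qed

lemma no_in:
  assumes u: "u \<in> H n" and no: "\<And>w. (w, u) \<notin> arcs n"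
  shows "set u \<subseteq> {1,2}"
proof (rule ccontr)
  assume "\<not> set u \<subseteq> {1,2}"
  then have "0 \<in> set u" using u unfolding H_def by auto
  then obtain a c where ac: "u = a @ 0 # c" "0 \<notin> set a" by (metis split_list_first)
  show False
  proof (cases a rule: rev_exhaust)
    case Nil
    then show False using u ac unfolding H_def by simp
  next
    case (snoc a' d)
    have "d \<in> {1,2}" using snoc ac u unfolding H_def by auto
    then show False
    proof
      assume d: "d = 1"
      have ueq: "u = a' @ [1,0] @ c" using ac snoc d by simp
      show False
      proof (cases "a' = []")
        case True
        then have "(2 # c, u) \<in> arcs n" using u ueq H_lead' unfolding arcs_def by auto
        then show False using no by blast
      next
        case False
        have "a' @ [0,2] @ c \<in> H n" using H_mid[of a' 1 0 c n 0 2] u ueq False by simp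
        then have "(a' @ [0,2] @ c, u) \<in> arcs n" using u ueq unfolding arcs_def by blast
        then show False using no by blast
      qed
    next
      assume d: "d \<in> {2}"
      have ueq: "u = a' @ [2,0] @ c" using ac snoc d by simp
      have "a' @ [1,2] @ c \<in> H n" using H_mid[of a' 2 0 c n 1 2] u ueq by simp
      then have "(a' @ [1,2] @ c, u) \<in> arcs n" using u ueq unfolding arcs_def by blast
      then show False using no by blast
    qed
  qed
qed

lemma hb_pos: "xs \<noteq> [] \<Longrightarrow> hd xs \<noteq> 0 \<Longrightarrow> hb_val xs > 0"
  using len_le_val[of xs] by (cases xs) auto

lemma uniq01:
  "set u \<subseteq> {0,1} \<Longrightarrow> set u' \<subseteq> {0,1} \<Longrightarrow> (u \<noteq> [] \<longrightarrow> hd u \<noteq> 0) \<Longrightarrow> (u' \<noteq> [] \<longrightarrow> hd u' \<noteq> 0)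
   \<Longrightarrow> hb_val u = hb_val u' \<Longrightarrow> u = u'"
proof (induction u arbitrary: u' rule: rev_induct)
  case Nil
  then show ?case using hb_pos[of u'] by (auto simp: hb_val_def)
next
  case (snoc d a)
  show ?case
  proof (cases u' rule: rev_exhaust)
    case Nil
    then show ?thesis using snoc.prems hb_pos[of "a @ [d]"] by (auto simp: hb_val_def)
  next
    case (snoc a' d')
    have v: "2 * hb_val a + d = 2 * hb_val a' + d'" using snoc snoc.prems(5) by (simp add: hb_snoc)
    have "d \<in> {0,1}" "d' \<in> {0,1}" using snoc snoc.prems by auto
    then have dd: "d = d'" using v by (auto; presburger)
    then have "hb_val a = hb_val a'" using v by simp
    moreover have "a \<noteq> [] \<longrightarrow> hd a \<noteq> 0" using snoc.prems(3) by auto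
    moreover have "a' \<noteq> [] \<longrightarrow> hd a' \<noteq> 0" using snoc.prems(4) snoc by auto
    ultimately have "a = a'" using snoc.IH[of a'] snoc.prems snoc by auto
    then show ?thesis using dd snoc by simp
  qed
qed

lemma uniq12:
  "set u \<subseteq> {1,2} \<Longrightarrow> set u' \<subseteq> {1,2} \<Longrightarrow> hb_val u = hb_val u' \<Longrightarrow> u = (u'::nat list)"
proof (induction u arbitrary: u' rule: rev_induct)
  case Nil
  then show ?case by (cases u' rule: rev_exhaust) (auto simp: hb_val_def hb_snoc)
next
  case (snoc d a)
  show ?case
  proof (cases u' rule: rev_exhaust)
    case Nil
    then show ?thesis using snoc.prems by (auto simp: hb_val_def hb_snoc)
  next
    case (snoc a' d')
    have v: "2 * hb_val a + d = 2 * hb_val a' + d'" using snoc snoc.prems(3) by (simp add: hb_snoc)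
    have "d \<in> {1,2}" "d' \<in> {1,2}" using snoc snoc.prems by auto
    then have dd: "d = d'" using v by (auto; presburger)
    then have "hb_val a = hb_val a'" using v by simp
    then have "a = a'" using snoc.IH[of a'] snoc.prems snoc by auto
    then show ?thesis using dd snoc by simp
  qed
qed

theorem mainTheorem6:
  fixes n :: nat
  assumes "v n = 0"
  shows "is_directed_path_graph (H n) (arcs n)"
proof -
  have c: "card (arcs n) + 1 = card (H n)" using assms unfolding v_def b_def by linarith
  then have ne: "H n \<noteq> {}" by auto
  have fin: "finite (H n)" by (rule finite_H)
  have f3: "finite (val3 ` H n)" using fin by simp
  have "Min (val3 ` H n) \<in> val3 ` H n" using Min_in[OF f3] ne by simp
  then obtain s where s: "s \<in> H n" "val3 s = Min (val3 ` H n)" by (metis imageE)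
  have "Max (val3 ` H n) \<in> val3 ` H n" using Max_in[OF f3] ne by simp
  then obtain t where t: "t \<in> H n" "val3 t = Max (val3 ` H n)" by (metis imageE)
  have tno: "\<And>w. (t, w) \<notin> arcs n"
  proof
    fix w assume a: "(t, w) \<in> arcs n"
    then have "w \<in> H n" using arcs_sub by blast
    then have "val3 w \<le> val3 t" using t Max_ge[OF f3] by simp
    then show False using arc_incr[OF a] by simp
  qed
  have sno: "\<And>w. (w, s) \<notin> arcs n"
  proof
    fix w assume a: "(w, s) \<in> arcs n"
    then have "w \<in> H n" using arcs_sub by blast
    then have "val3 s \<le> val3 w" using s Min_le[OF f3] by simp
    then show False using arc_incr[OF a] by simp
  qed
  have out: "\<exists>w. (u, w) \<in> arcs n" if uu: "u \<in> H n" "u \<noteq> t" for u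
  proof (rule ccontr)
    assume "\<nexists>w. (u, w) \<in> arcs n"
    then have "set u \<subseteq> {0,1}" using no_out[OF uu(1)] by blast
    moreover have "set t \<subseteq> {0,1}" using no_out[OF t(1) tno] .
    ultimately have "u = t" using uniq01[of u t] uu(1) t(1) unfolding H_def by auto
    then show False using uu by simp
  qed
  have inn: "\<exists>w. (w, u) \<in> arcs n" if uu: "u \<in> H n" "u \<noteq> s" for u
  proof (rule ccontr)
    assume "\<nexists>w. (w, u) \<in> arcs n"
    then have "set u \<subseteq> {1,2}" using no_in[OF uu(1)] by blast
    moreover have "set s \<subseteq> {1,2}" using no_in[OF s(1) sno] .
    ultimately have "u = s" using uniq12[of u s] uu(1) s(1) unfolding H_def by auto
    then show False using uu by simp
  qed
  obtain us where us: "us \<noteq> []" "distinct us" "set us = H n" "arcs n = set (zip us (tl us))"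
    using path_aux[OF refl fin arcs_sub, of val3 s t] arc_incr s(1) t(1) out inn c by blast
  then show ?thesis unfolding is_directed_path_graph_def zip_path_set[symmetric] by blast
qed

end
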